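(* Let $(R,\cdot,\alpha)$ be a non-unital hom-associative ring, let $\sigma$ be a ring endomorphism of $R$ and $\delta$ a $\sigma$-derivation of $R$, and assume $\alpha\circ\delta=\delta\circ\alpha$ and $\alpha\circ\sigma=\sigma\circ\alpha$. Extend $\alpha$ homogeneously to $R[X;\sigma,\delta]$. Then $R[X;\sigma,\delta]$ is hom-associative with this twisting map.
   Context: A hom-associative ring is a triple $(R,\cdot,\alpha)$ where $R$ is an abelian group with a biadditive (not necessarily associative or unital) multiplication $\cdot$ and an additive map $\alpha\colon R\to R$ satisfying $\alpha(a)\cdot(b\cdot c)=(a\cdot b)\cdot\alpha(c)$ for all $a,b,c$. A $\sigma$-derivation is an additive map $\delta\colon R\to R$ with $\delta(a\cdot b)=\sigma(a)\cdot\delta(b)+\delta(a)\cdot b$ for all $a,b\in R$. $\mathbb{N}$ denotes the non-negative integers. For $m\in\mathbb{N}$ and $0\le i\le m$, $\pi_i^m\colon R\to R$ denotes the sum of all $\binom{m}{i}$ compositions of $i$ copies of $\sigma$ and $m-i$ copies of $\delta$ in arbitrary order ($\pi_0^0=\mathrm{id}_R$), and $\pi_i^m:=0$ if $i<0$ or $i>m$. The non-unital, non-associative Ore extension $R[X;\sigma,\delta]$ is the set of formal sums $\sum_{i\in\mathbb{N}}a_iX^i$ with $a_i\in R$, finitely many nonzero, with coefficientwise addition and the distributive multiplication determined by $aX^m\cdot bX^n=\sum_{i\in\mathbb{N}}(a\cdot\pi_i^m(b))X^{i+n}$. The homogeneous extension of $\alpha$ is $\alpha\left(\sum_ia_iX^i\right):=\sum_i\alpha(a_i)X^i$.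 Hom-associativity of $R[X;\sigma,\delta]$ means $\alpha(u)(vw)=(uv)\alpha(w)$ for all $u,v,w\in R[X;\sigma,\delta]$. *)

theory Defs
  imports Main
begin

text \<open>R is modelled as a type of class ab_group_add (abelian group) with an explicit
  multiplication mul, not necessarily associative or unital.\<close>

definition additive :: "('a::ab_group_add \<Rightarrow> 'a) \<Rightarrow> bool" where
  "additive f \<longleftrightarrow> (\<forall>x y. f (x + y) = f x + f y)"

definition biadditive :: "('a::ab_group_add \<Rightarrow> 'a \<Rightarrow> 'a) \<Rightarrow> bool" where
  "biadditive mul \<longleftrightarrow> (\<forall>x y z. mul (x + y) z = mul x z + mul y z)
                        \<and> (\<forall>x y z. mul x (y + z) = mul x y + mul x z)"

definition hom_assoc_ring :: "('a::ab_group_add \<Rightarrow> 'a \<Rightarrow> 'a) \<Rightarrow> ('a \<Rightarrow> 'a) \<Rightarrow> bool" where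
  "hom_assoc_ring mul \<alpha> \<longleftrightarrow> biadditive mul \<and> additive \<alpha>
     \<and> (\<forall>a b c. mul (\<alpha> a) (mul b c) = mul (mul a b) (\<alpha> c))"

definition ring_endo :: "('a::ab_group_add \<Rightarrow> 'a \<Rightarrow> 'a) \<Rightarrow> ('a \<Rightarrow> 'a) \<Rightarrow> bool" where
  "ring_endo mul \<sigma> \<longleftrightarrow> additive \<sigma> \<and> (\<forall>a b. \<sigma> (mul a b) = mul (\<sigma> a) (\<sigma> b))"

definition sigma_derivation ::
  "('a::ab_group_add \<Rightarrow> 'a \<Rightarrow> 'a) \<Rightarrow> ('a \<Rightarrow> 'a) \<Rightarrow> ('a \<Rightarrow> 'a) \<Rightarrow> bool" where
  "sigma_derivation mul \<sigma> \<delta> \<longleftrightarrow> additive \<delta>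
     \<and> (\<forall>a b. \<delta> (mul a b) = mul (\<sigma> a) (\<delta> b) + mul (\<delta> a) b)"

definition word_comp :: "('a \<Rightarrow> 'a) \<Rightarrow> ('a \<Rightarrow> 'a) \<Rightarrow> bool list \<Rightarrow> 'a \<Rightarrow> 'a" where
  "word_comp \<sigma> \<delta> w = foldr (\<lambda>b f. (if b then \<sigma> else \<delta>) \<circ> f) w id"

text \<open>pi i m: the sum of all compositions of i copies of \<sigma> and m - i copies of \<delta>,
  in arbitrary order (zero if i > m, as the set of words is then empty).\<close>
definition pi_map :: "('a::ab_group_add \<Rightarrow> 'a) \<Rightarrow> ('a \<Rightarrow> 'a) \<Rightarrow> nat \<Rightarrow> nat \<Rightarrow> 'a \<Rightarrow> 'a" where
  "pi_map \<sigma> \<delta> i m x = (\<Sum>w\<in>{w. length w = m \<and> count_list w True = i}. word_comp \<sigma> \<delta> w x)"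

text \<open>Elements of R[X;\<sigma>,\<delta>]: coefficient functions nat \<Rightarrow> R with finite support.\<close>
definition fin_supp :: "(nat \<Rightarrow> 'a::zero) \<Rightarrow> bool" where
  "fin_supp u \<longleftrightarrow> finite {n. u n \<noteq> 0}"

text \<open>Product: (a X^m)(b X^n) = sum_i (a \<cdot> pi_i^m(b)) X^(i+n), extended distributively.\<close>
definition ore_mult ::
  "('a::ab_group_add \<Rightarrow> 'a \<Rightarrow> 'a) \<Rightarrow> ('a \<Rightarrow> 'a) \<Rightarrow> ('a \<Rightarrow> 'a)
    \<Rightarrow> (nat \<Rightarrow> 'a) \<Rightarrow> (nat \<Rightarrow> 'a) \<Rightarrow> (nat \<Rightarrow> 'a)" where
  "ore_mult mul \<sigma> \<delta> u v = (\<lambda>k. \<Sum>m\<in>{m. u m \<noteq> 0}. \<Sum>n\<in>{n. v n \<noteq> 0}. \<Sum>i\<in>{..m}.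
      if i + n = k then mul (u m) (pi_map \<sigma> \<delta> i m (v n)) else 0)"

definition hom_ext :: "('a \<Rightarrow> 'a) \<Rightarrow> (nat \<Rightarrow> 'a) \<Rightarrow> (nat \<Rightarrow> 'a)" where
  "hom_ext \<alpha> u = (\<lambda>i. \<alpha> (u i))"

end

theory Submission
  imports Defs
begin

lemma additive_0: "additive f \<Longrightarrow> f 0 = 0"
  unfolding additive_def by (metis add_cancel_right_right)

lemma additive_sum: "additive f \<Longrightarrow> f (sum g A) = (\<Sum>a\<in>A. f (g a))"
proof (induction A rule: infinite_finite_induct)
  case (infinite A) then show ?case by (simp add: additive_0)
next
  case empty then show ?case by (simp add: additive_0)
next
  case (insert x F) then show ?case by (simp add: additive_def)
qed

lemma additive_if: "additive f \<Longrightarrow> f (if c then x else 0) = (if c then f x else 0)"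
  by (simp add: additive_0)

lemma if_sum_zero: "(if c then sum f A else 0) = (\<Sum>x\<in>A. if c then f x else 0)"
  by simp

lemma collapse:
  assumes "finite Q" "t \<in> Q"
  shows "(\<Sum>q\<in>Q. if q = t then X q else 0) = X t"
  using assms by simp

lemma if_add0: "(if c then a + b else 0) = (if c then a else 0) + (if c then b else (0::'a::ab_group_add))"
  by simp

locale ore =
  fixes mul :: "'a::ab_group_add \<Rightarrow> 'a \<Rightarrow> 'a" and \<alpha> \<sigma> \<delta> :: "'a \<Rightarrow> 'a"
  assumes ha: "hom_assoc_ring mul \<alpha>" and re: "ring_endo mul \<sigma>"
    and sd: "sigma_derivation mul \<sigma> \<delta>" and ad: "\<alpha> \<circ> \<delta> = \<delta> \<circ> \<alpha>"
    and asg: "\<alpha> \<circ> \<sigma> = \<sigma> \<circ> \<alpha>"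
begin

lemma add_\<alpha>: "additive \<alpha>" using ha by (simp add: hom_assoc_ring_def)
lemma add_\<sigma>: "additive \<sigma>" using re by (simp add: ring_endo_def)
lemma add_\<delta>: "additive \<delta>" using sd by (simp add: sigma_derivation_def)
lemma add_mulL: "additive (\<lambda>x. mul x y)" using ha by (simp add: hom_assoc_ring_def biadditive_def additive_def)
lemma add_mulR: "additive (mul x)" using ha by (simp add: hom_assoc_ring_def biadditive_def additive_def)

lemma hassoc: "mul (\<alpha> a) (mul b c) = mul (mul a b) (\<alpha> c)" using ha by (simp add: hom_assoc_ring_def)
lemma \<sigma>_mul: "\<sigma> (mul a b) = mul (\<sigma> a) (\<sigma> b)" using re by (simp add: ring_endo_def)
lemma \<delta>_mul: "\<delta> (mul a b) = mul (\<sigma> a) (\<delta> b) + mul (\<delta> a) b" using sd by (simp add: sigma_derivation_def)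
lemma \<alpha>\<sigma>: "\<alpha> (\<sigma> x) = \<sigma> (\<alpha> x)" using asg by (metis comp_apply)
lemma \<alpha>\<delta>: "\<alpha> (\<delta> x) = \<delta> (\<alpha> x)" using ad by (metis comp_apply)

lemmas lin_simps =
  additive_0[OF add_\<alpha>] additive_0[OF add_\<sigma>] additive_0[OF add_\<delta>]
  additive_0[OF add_mulL] additive_0[OF add_mulR]
  additive_sum[OF add_\<alpha>] additive_sum[OF add_\<sigma>] additive_sum[OF add_\<delta>]
  additive_sum[OF add_mulL] additive_sum[OF add_mulR]
  additive_if[OF add_\<alpha>] additive_if[OF add_\<sigma>] additive_if[OF add_\<delta>]
  additive_if[OF add_mulL] additive_if[OF add_mulR]

lemma \<alpha>_add: "\<alpha> (x + y) = \<alpha> x + \<alpha> y" using add_\<alpha> by (simp add: additive_def)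
lemma \<sigma>_add: "\<sigma> (x + y) = \<sigma> x + \<sigma> y" using add_\<sigma> by (simp add: additive_def)
lemma \<delta>_add: "\<delta> (x + y) = \<delta> x + \<delta> y" using add_\<delta> by (simp add: additive_def)
lemma mul_addL: "mul (x + y) z = mul x z + mul y z" using add_mulL by (simp add: additive_def)
lemma mul_addR: "mul z (x + y) = mul z x + mul z y" using add_mulR by (simp add: additive_def)

fun P :: "nat \<Rightarrow> nat \<Rightarrow> 'a \<Rightarrow> 'a" where
  "P i 0 x = (if i = 0 then x else 0)"
| "P i (Suc m) x = (case i of 0 \<Rightarrow> 0 | Suc k \<Rightarrow> \<sigma> (P k m x)) + \<delta> (P i m x)"

declare P.simps(2)[simp del]

lemma P_add: "P i m (x + y) = P i m x + P i m y"
  by (induction m arbitrary: i) (auto simp: P.simps \<sigma>_add \<delta>_add split: nat.split)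

lemma add_P: "additive (P i m)" by (simp add: additive_def P_add)

lemma P_high: "m < i \<Longrightarrow> P i m x = 0"
  by (induction m arbitrary: i) (auto simp: P.simps lin_simps split: nat.split)

lemma \<alpha>_P: "\<alpha> (P i m x) = P i m (\<alpha> x)"
  by (induction m arbitrary: i) (auto simp: P.simps lin_simps \<alpha>_add \<alpha>\<sigma> \<alpha>\<delta> split: nat.split)

lemmas P_simps = additive_0[OF add_P] additive_sum[OF add_P] additive_if[OF add_P]

lemma words_Suc: "{w. length w = Suc m \<and> count_list w True = i} =
   Cons True ` {w. length w = m \<and> Suc (count_list w True) = i} \<union>
   Cons False ` {w. length w = m \<and> count_list w True = i}"
  by (auto simp: length_Suc_conv image_iff)

lemma words_fin: "finite {w::bool list. length w = m \<and> Q w}"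
proof -
  have "{w::bool list. length w = m \<and> Q w} \<subseteq> {w. set w \<subseteq> UNIV \<and> length w = m}" by auto
  then show ?thesis using finite_lists_length_eq[of "UNIV::bool set" m] finite_subset by auto
qed

lemma wc_cons: "word_comp \<sigma> \<delta> (b # w) x = (if b then \<sigma> else \<delta>) (word_comp \<sigma> \<delta> w x)"
  by (simp add: word_comp_def)

lemma pi_P: "pi_map \<sigma> \<delta> i m x = P i m x"
proof (induction m arbitrary: i)
  case 0
  have "{w::bool list. length w = 0 \<and> count_list w True = i} = (if i = 0 then {[]} else {})" by auto
  then show ?case by (simp add: pi_map_def word_comp_def)
next
  case (Suc m)
  have d: "Cons True ` {w. length w = m \<and> Suc (count_list w True) = i} \<inter>
   Cons False ` {w. length w = m \<and> count_list w True = i} = {}" by auto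
  have "pi_map \<sigma> \<delta> i (Suc m) x =
     (\<Sum>w\<in>{w. length w = m \<and> Suc (count_list w True) = i}. \<sigma> (word_comp \<sigma> \<delta> w x))
   + (\<Sum>w\<in>{w. length w = m \<and> count_list w True = i}. \<delta> (word_comp \<sigma> \<delta> w x))"
    unfolding pi_map_def words_Suc
    by (subst sum.union_disjoint[OF _ _ d]) (auto simp: words_fin sum.reindex wc_cons)
  also have "\<dots> = (case i of 0 \<Rightarrow> 0 | Suc k \<Rightarrow> \<sigma> (P k m x)) + \<delta> (P i m x)"
  proof (cases i)
    case 0 then show ?thesis by (simp add: Suc.IH[symmetric] pi_map_def lin_simps)
  next
    case (Suc k) then show ?thesis by (simp add: Suc.IH[symmetric] pi_map_def lin_simps)
  qed
  finally show ?case by (simp add: P.simps)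
qed

definition sp :: "nat \<Rightarrow> nat \<Rightarrow> 'a \<Rightarrow> 'a" where
  "sp i m x = (case i of 0 \<Rightarrow> 0 | Suc k \<Rightarrow> \<sigma> (P k m x))"

lemma sp_0[simp]: "sp 0 m x = 0" and sp_Suc[simp]: "sp (Suc k) m x = \<sigma> (P k m x)"
  by (simp_all add: sp_def)

lemma P_Suc': "P i (Suc m) x = sp i m x + \<delta> (P i m x)" by (simp add: sp_def P.simps)

lemma sp_mul: "(\<And>i. P i m (mul a b) = (\<Sum>j\<le>m. mul (P j m a) (P i j b))) \<Longrightarrow>
   sp i m (mul a b) = (\<Sum>j\<le>m. mul (\<sigma> (P j m a)) (sp i j b))"
  by (cases i) (simp_all add: lin_simps \<sigma>_mul)

lemma P_mul: "P i m (mul a b) = (\<Sum>j\<le>m. mul (P j m a) (P i j b))"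
proof (induction m arbitrary: i)
  case 0 then show ?case by (simp add: lin_simps)
next
  case (Suc m)
  have "P i (Suc m) (mul a b) = sp i m (mul a b) + \<delta> (P i m (mul a b))" by (rule P_Suc')
  also have "\<dots> = (\<Sum>j\<le>m. mul (\<sigma> (P j m a)) (sp i j b))
      + (\<Sum>j\<le>m. mul (\<sigma> (P j m a)) (\<delta> (P i j b)) + mul (\<delta> (P j m a)) (P i j b))"
    by (simp add: sp_mul[OF Suc.IH] Suc.IH lin_simps \<delta>_mul)
  also have "\<dots> = (\<Sum>j\<le>m. mul (\<sigma> (P j m a)) (P i (Suc j) b))
      + (\<Sum>j\<le>m. mul (\<delta> (P j m a)) (P i j b))"
    by (simp add: P_Suc' mul_addR sum.distrib)
  also have "(\<Sum>j\<le>m. mul (\<delta> (P j m a)) (P i j b)) = (\<Sum>j\<le>Suc m. mul (\<delta> (P j m a)) (P i j b))"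
    by (simp add: P_high lin_simps)
  also have "\<dots> = mul (\<delta> (P 0 m a)) (P i 0 b) + (\<Sum>j\<le>m. mul (\<delta> (P (Suc j) m a)) (P i (Suc j) b))"
    by (rule sum.atMost_Suc_shift)
  also have "(\<Sum>j\<le>Suc m. mul (P j (Suc m) a) (P i j b)) = mul (P 0 (Suc m) a) (P i 0 b)
      + (\<Sum>j\<le>m. mul (P (Suc j) (Suc m) a) (P i (Suc j) b))"
    by (rule sum.atMost_Suc_shift)
  ultimately show ?case
    by (simp add: P_Suc' mul_addL sum.distrib algebra_simps)
qed

lemma P_comp: "P k (p + m) x = (\<Sum>i\<le>p. \<Sum>j\<le>m. if i + j = k then P i p (P j m x) else 0)"
proof (induction p arbitrary: k)
  case 0
  have "(\<Sum>j\<le>m. if j = k then P j m x else 0) = P k m x"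
    by (cases "k \<le> m") (auto simp: P_high)
  moreover have "(\<Sum>i\<le>(0::nat). \<Sum>j\<le>m. if i + j = k then P i 0 (P j m x) else 0)
     = (\<Sum>j\<le>m. if j = k then P j m x else 0)"
    by (simp add: P.simps)
  ultimately show ?case by simp
next
  case (Suc p)
  have A: "sp k (p + m) x = (\<Sum>i\<le>p. \<Sum>j\<le>m. if Suc i + j = k then \<sigma> (P i p (P j m x)) else 0)"
  proof (cases k)
    case 0 then show ?thesis by simp
  next
    case (Suc k') then show ?thesis by (simp add: Suc.IH lin_simps)
  qed
  have z: "\<And>y. P (Suc p) p y = 0" by (rule P_high) simp
  have z2: "(\<Sum>j\<le>m. if Suc (p + j) = k then \<delta> (P (Suc p) p (P j m x)) else 0) = 0"
    by (simp add: z lin_simps cong: if_cong)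
  have "P k (Suc p + m) x = sp k (p + m) x + \<delta> (P k (p + m) x)" by (simp add: P_Suc')
  also have "\<dots> = (\<Sum>i\<le>p. \<Sum>j\<le>m. if Suc i + j = k then \<sigma> (P i p (P j m x)) else 0)
     + (\<Sum>i\<le>Suc p. \<Sum>j\<le>m. if i + j = k then \<delta> (P i p (P j m x)) else 0)"
    by (simp add: A Suc.IH lin_simps z2)
  also have "\<dots> = (\<Sum>i\<le>Suc p. \<Sum>j\<le>m. if i + j = k then sp i p (P j m x) else 0)
     + (\<Sum>i\<le>Suc p. \<Sum>j\<le>m. if i + j = k then \<delta> (P i p (P j m x)) else 0)"
    by (simp add: sum.atMost_Suc_shift del: sum.atMost_Suc cong: if_cong)
  also have "\<dots> = (\<Sum>i\<le>Suc p. \<Sum>j\<le>m. if i + j = k then P i (Suc p) (P j m x) else 0)"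
    by (simp only: P_Suc' if_add0 sum.distrib)
  finally show ?case .
qed

lemma om_box:
  assumes u: "\<forall>m. u m \<noteq> 0 \<longrightarrow> m < N" and v: "\<forall>n. v n \<noteq> 0 \<longrightarrow> n < M"
  shows "ore_mult mul \<sigma> \<delta> u v k =
    (\<Sum>m<N. \<Sum>n<M. \<Sum>i<N. if i + n = k then mul (u m) (P i m (v n)) else 0)"
proof -
  have su: "{m. u m \<noteq> 0} \<subseteq> {..<N}" and sv: "{n. v n \<noteq> 0} \<subseteq> {..<M}" using u v by auto
  have "ore_mult mul \<sigma> \<delta> u v k =
    (\<Sum>m\<in>{m. u m \<noteq> 0}. \<Sum>n\<in>{n. v n \<noteq> 0}. \<Sum>i<N. if i + n = k then mul (u m) (P i m (v n)) else 0)"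
    unfolding ore_mult_def pi_P
  proof (rule sum.cong[OF refl], rule sum.cong[OF refl])
    fix m n assume "m \<in> {m. u m \<noteq> 0}"
    then have "m < N" using u by auto
    then show "(\<Sum>i\<le>m. if i + n = k then mul (u m) (P i m (v n)) else 0) =
       (\<Sum>i<N. if i + n = k then mul (u m) (P i m (v n)) else 0)"
      by (intro sum.mono_neutral_left) (auto simp: P_high lin_simps)
  qed
  also have "\<dots> = (\<Sum>m\<in>{m. u m \<noteq> 0}. \<Sum>n<M. \<Sum>i<N. if i + n = k then mul (u m) (P i m (v n)) else 0)"
    apply (rule sum.cong[OF refl], rule sum.mono_neutral_left)
    using sv by (auto simp: P_simps lin_simps cong: if_cong)
  also have "\<dots> = (\<Sum>m<N. \<Sum>n<M. \<Sum>i<N. if i + n = k then mul (u m) (P i m (v n)) else 0)"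
    by (intro sum.mono_neutral_left) (use su in \<open>auto simp: P_simps lin_simps cong: if_cong\<close>)
  finally show ?thesis .
qed

lemma om_box2:
  assumes u: "\<forall>m. u m \<noteq> 0 \<longrightarrow> m < N" and v: "\<forall>n. v n \<noteq> 0 \<longrightarrow> n < M" and L: "N \<le> L"
  shows "ore_mult mul \<sigma> \<delta> u v k =
    (\<Sum>m<N. \<Sum>n<M. \<Sum>i<L. if i + n = k then mul (u m) (P i m (v n)) else 0)"
  unfolding om_box[OF u v]
  apply (rule sum.cong[OF refl], rule sum.cong[OF refl], rule sum.mono_neutral_left)
  using L by (auto simp: P_high lin_simps)

lemma inner1: "l < N \<Longrightarrow> mul (\<alpha> a) (P i l (mul b c)) =
   (\<Sum>p<N. mul (mul a (P p l b)) (\<alpha> (P i p c)))"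
  unfolding P_mul lin_simps hassoc
  by (intro sum.mono_neutral_left) (auto simp: P_high lin_simps)

lemma comp': "p < N \<Longrightarrow> m < N \<Longrightarrow> P k (p + m) y =
   (\<Sum>i<N. \<Sum>j<N. if i + j = k then P i p (P j m y) else 0)"
  unfolding P_comp
proof -
  assume a: "p < N" "m < N"
  have "(\<Sum>i\<le>p. \<Sum>j\<le>m. if i + j = k then P i p (P j m y) else 0) =
        (\<Sum>i\<le>p. \<Sum>j<N. if i + j = k then P i p (P j m y) else 0)"
    using a by (intro sum.cong refl sum.mono_neutral_left) (auto simp: P_high P_simps)
  also have "\<dots> = (\<Sum>i<N. \<Sum>j<N. if i + j = k then P i p (P j m y) else 0)"
    using a by (intro sum.mono_neutral_left) (auto simp: P_high P_simps intro!: sum.neutral)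
  finally show "(\<Sum>i\<le>p. \<Sum>j\<le>m. if i + j = k then P i p (P j m y) else 0) =
        (\<Sum>i<N. \<Sum>j<N. if i + j = k then P i p (P j m y) else 0)" .
qed

lemma collapse2: "finite Q \<Longrightarrow> t \<in> Q \<Longrightarrow>
   (\<Sum>q\<in>Q. if c \<and> t = q then X q else 0) = (if c then X t else (0::'b::comm_monoid_add))"
  by (cases c) (simp_all add: sum.delta)

lemma collapse3: "finite Q \<Longrightarrow> t \<in> Q \<Longrightarrow>
   (\<Sum>q\<in>Q. if i + q = K \<and> t = q then X else 0) = (if i + t = K then X else (0::'b::comm_monoid_add))"
proof -
  assume a: "finite Q" "t \<in> Q"
  have "(\<Sum>q\<in>Q. if i + q = K \<and> t = q then X else 0) = (\<Sum>q\<in>Q. if q = t then (if i + t = K then X else 0) else 0)"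
    by (rule sum.cong) auto
  then show ?thesis using a by (simp add: sum.delta)
qed

lemma collapse_gen: "finite Q \<Longrightarrow> t \<in> Q \<Longrightarrow>
   (\<Sum>q\<in>Q. if C q \<and> t = q then X q else 0) = (if C t then X t else (0::'b::comm_monoid_add))"
proof -
  assume a: "finite Q" "t \<in> Q"
  have "(\<Sum>q\<in>Q. if C q \<and> t = q then X q else 0) = (\<Sum>q\<in>Q. if q = t then (if C t then X t else 0) else 0)"
    by (rule sum.cong) auto
  then show ?thesis using a by (simp add: sum.delta)
qed

lemma if_if0: "(if c1 then (if c2 then X else 0) else 0) = (if c1 \<and> c2 then X else (0::'b::zero))"
  by simp

lemma main:
  assumes fu: "fin_supp u" and fv: "fin_supp v" and fw: "fin_supp w"
  shows "ore_mult mul \<sigma> \<delta> (hom_ext \<alpha> u) (ore_mult mul \<sigma> \<delta> v w) K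
       = ore_mult mul \<sigma> \<delta> (ore_mult mul \<sigma> \<delta> u v) (hom_ext \<alpha> w) K"
proof -
  obtain N1 where N1: "{m. u m \<noteq> 0} \<subseteq> {..<N1}" using fu unfolding fin_supp_def finite_nat_set_iff_bounded by blast
  obtain N2 where N2: "{m. v m \<noteq> 0} \<subseteq> {..<N2}" using fv unfolding fin_supp_def finite_nat_set_iff_bounded by blast
  obtain N3 where N3: "{m. w m \<noteq> 0} \<subseteq> {..<N3}" using fw unfolding fin_supp_def finite_nat_set_iff_bounded by blast
  define N where "N = N1 + N2 + N3"
  have su: "\<forall>m. u m \<noteq> 0 \<longrightarrow> m < N" using N1 unfolding N_def by auto
  have sv: "\<forall>m. v m \<noteq> 0 \<longrightarrow> m < N" using N2 unfolding N_def by auto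
  have sw: "\<forall>m. w m \<noteq> 0 \<longrightarrow> m < N" using N3 unfolding N_def by auto
  have sau: "\<forall>m. hom_ext \<alpha> u m \<noteq> 0 \<longrightarrow> m < N" using su additive_0[OF add_\<alpha>] unfolding hom_ext_def by metis
  have saw: "\<forall>m. hom_ext \<alpha> w m \<noteq> 0 \<longrightarrow> m < N" using sw additive_0[OF add_\<alpha>] unfolding hom_ext_def by metis
  have vw: "\<And>q. ore_mult mul \<sigma> \<delta> v w q =
    (\<Sum>m<N. \<Sum>n<N. \<Sum>j<N. if j + n = q then mul (v m) (P j m (w n)) else 0)"
    by (rule om_box[OF sv sw])
  have uv: "\<And>q. ore_mult mul \<sigma> \<delta> u v q =
    (\<Sum>m<N. \<Sum>n<N. \<Sum>j<N. if j + n = q then mul (u m) (P j m (v n)) else 0)"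
    by (rule om_box[OF su sv])
  have svw: "\<forall>q. ore_mult mul \<sigma> \<delta> v w q \<noteq> 0 \<longrightarrow> q < 2 * N"
    unfolding vw by (auto intro!: sum.neutral)
  have suv: "\<forall>q. ore_mult mul \<sigma> \<delta> u v q \<noteq> 0 \<longrightarrow> q < N + N"
    unfolding uv by (auto intro!: sum.neutral)
  have ob: "\<And>k. ore_mult mul \<sigma> \<delta> (ore_mult mul \<sigma> \<delta> u v) (hom_ext \<alpha> w) k =
    (\<Sum>m<N+N. \<Sum>n<N. \<Sum>i<2*N. if i + n = k then mul (ore_mult mul \<sigma> \<delta> u v m) (P i m (hom_ext \<alpha> w n)) else 0)"
    by (rule om_box2[OF suv saw]) simp
  define G where "G l m n p i j = mul (mul (u l) (P p l (v m))) (P i p (P j m (\<alpha> (w n))))" for l m n p i j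
  have perm0: "(\<Sum>l<N. \<Sum>i<N. \<Sum>m<N. \<Sum>n<N. \<Sum>j<N. \<Sum>p<N. if i + j + n = K then G l m n p i j else 0) = (\<Sum>l<N. \<Sum>i<N. \<Sum>n<N. \<Sum>m<N. \<Sum>j<N. \<Sum>p<N. if i + j + n = K then G l m n p i j else 0)"
    apply (rule sum.cong[OF refl])
    apply (rule sum.cong[OF refl])
    by (rule sum.swap)
  have perm1: "(\<Sum>l<N. \<Sum>i<N. \<Sum>n<N. \<Sum>m<N. \<Sum>j<N. \<Sum>p<N. if i + j + n = K then G l m n p i j else 0) = (\<Sum>l<N. \<Sum>n<N. \<Sum>i<N. \<Sum>m<N. \<Sum>j<N. \<Sum>p<N. if i + j + n = K then G l m n p i j else 0)"
    apply (rule sum.cong[OF refl])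
    by (rule sum.swap)
  have perm2: "(\<Sum>l<N. \<Sum>n<N. \<Sum>i<N. \<Sum>m<N. \<Sum>j<N. \<Sum>p<N. if i + j + n = K then G l m n p i j else 0) = (\<Sum>n<N. \<Sum>l<N. \<Sum>i<N. \<Sum>m<N. \<Sum>j<N. \<Sum>p<N. if i + j + n = K then G l m n p i j else 0)"
    by (rule sum.swap)
  have perm3: "(\<Sum>n<N. \<Sum>l<N. \<Sum>i<N. \<Sum>m<N. \<Sum>j<N. \<Sum>p<N. if i + j + n = K then G l m n p i j else 0) = (\<Sum>n<N. \<Sum>l<N. \<Sum>m<N. \<Sum>i<N. \<Sum>j<N. \<Sum>p<N. if i + j + n = K then G l m n p i j else 0)"
    apply (rule sum.cong[OF refl])
    apply (rule sum.cong[OF refl])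
    by (rule sum.swap)
  have perm4: "(\<Sum>n<N. \<Sum>l<N. \<Sum>m<N. \<Sum>i<N. \<Sum>j<N. \<Sum>p<N. if i + j + n = K then G l m n p i j else 0) = (\<Sum>n<N. \<Sum>l<N. \<Sum>m<N. \<Sum>i<N. \<Sum>p<N. \<Sum>j<N. if i + j + n = K then G l m n p i j else 0)"
    apply (rule sum.cong[OF refl])
    apply (rule sum.cong[OF refl])
    apply (rule sum.cong[OF refl])
    apply (rule sum.cong[OF refl])
    by (rule sum.swap)
  have perm5: "(\<Sum>n<N. \<Sum>l<N. \<Sum>m<N. \<Sum>i<N. \<Sum>p<N. \<Sum>j<N. if i + j + n = K then G l m n p i j else 0) = (\<Sum>n<N. \<Sum>l<N. \<Sum>m<N. \<Sum>p<N. \<Sum>i<N. \<Sum>j<N. if i + j + n = K then G l m n p i j else 0)"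
    apply (rule sum.cong[OF refl])
    apply (rule sum.cong[OF refl])
    apply (rule sum.cong[OF refl])
    by (rule sum.swap)
  have "ore_mult mul \<sigma> \<delta> (hom_ext \<alpha> u) (ore_mult mul \<sigma> \<delta> v w) K =
    (\<Sum>l<N. \<Sum>q<2*N. \<Sum>i<N. if i + q = K then
       (\<Sum>m<N. \<Sum>n<N. \<Sum>j<N. if j + n = q then (\<Sum>p<N. G l m n p i j) else 0) else 0)"
    unfolding om_box[OF sau svw] vw
    by (intro sum.cong refl) (simp add: hom_ext_def P_simps lin_simps inner1 G_def \<alpha>_P cong: if_cong)
  also have "\<dots> = (\<Sum>l<N. \<Sum>i<N. \<Sum>m<N. \<Sum>n<N. \<Sum>j<N. \<Sum>p<N. if i + j + n = K then G l m n p i j else 0)"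
    apply (simp only: if_sum_zero if_if0)
    apply (simp only: sum.swap[where A = "{..<2*N}"])
    apply (simp add: collapse3 add.assoc)
    done
  also have "\<dots> = (\<Sum>n<N. \<Sum>l<N. \<Sum>m<N. \<Sum>p<N. \<Sum>i<N. \<Sum>j<N. if i + j + n = K then G l m n p i j else 0)"
    using perm0 perm1 perm2 perm3 perm4 perm5 by (rule trans[OF _ trans[OF _ trans[OF _ trans[OF _ trans]]]])+
  also have "\<dots> = (\<Sum>n<N. \<Sum>k<2*N. \<Sum>l<N. \<Sum>m<N. \<Sum>p<N. if k + n = K then
        (\<Sum>i<N. \<Sum>j<N. if i + j = k then G l m n p i j else 0) else 0)"
    apply (simp only: if_sum_zero if_if0)
    apply (simp only: sum.swap[where A = "{..<2*N}"])
    apply (simp add: collapse_gen add.assoc)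
    done
  also have "\<dots> = (\<Sum>n<N. \<Sum>k<2*N. \<Sum>l<N. \<Sum>m<N. \<Sum>p<N. if k + n = K then
        mul (mul (u l) (P p l (v m))) (P k (p + m) (\<alpha> (w n))) else 0)"
    by (intro sum.cong refl) (simp add: comp' G_def lin_simps cong: if_cong)
  also have "\<dots> = (\<Sum>r<N+N. \<Sum>n<N. \<Sum>k<2*N. if k + n = K then
       (\<Sum>l<N. \<Sum>m<N. \<Sum>p<N. if p + m = r then mul (mul (u l) (P p l (v m))) (P k r (\<alpha> (w n))) else 0) else 0)"
    apply (simp only: if_sum_zero if_if0)
    apply (simp only: sum.swap[where A = "{..<N+N}"])
    apply (simp add: collapse_gen)
    done
  also have "\<dots> = ore_mult mul \<sigma> \<delta> (ore_mult mul \<sigma> \<delta> u v) (hom_ext \<alpha> w) K"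
    unfolding ob apply (simp only: uv)
    by (intro sum.cong refl) (simp add: hom_ext_def lin_simps cong: if_cong)
  finally show ?thesis .
qed

end

theorem mainTheorem8:
  fixes mul :: "'a::ab_group_add \<Rightarrow> 'a \<Rightarrow> 'a"
    and \<alpha> \<sigma> \<delta> :: "'a \<Rightarrow> 'a"
  assumes "hom_assoc_ring mul \<alpha>"
    and "ring_endo mul \<sigma>"
    and "sigma_derivation mul \<sigma> \<delta>"
    and "\<alpha> \<circ> \<delta> = \<delta> \<circ> \<alpha>"
    and "\<alpha> \<circ> \<sigma> = \<sigma> \<circ> \<alpha>"
  shows "\<forall>u v w. fin_supp u \<and> fin_supp v \<and> fin_supp w \<longrightarrow>
    ore_mult mul \<sigma> \<delta> (hom_ext \<alpha> u) (ore_mult mul \<sigma> \<delta> v w)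
      = ore_mult mul \<sigma> \<delta> (ore_mult mul \<sigma> \<delta> u v) (hom_ext \<alpha> w)"
proof (intro allI impI ext)
  interpret ore mul \<alpha> \<sigma> \<delta> using assms by unfold_locales
  fix u v w :: "nat \<Rightarrow> 'a" and K :: nat assume "fin_supp u \<and> fin_supp v \<and> fin_supp w"
  then show "ore_mult mul \<sigma> \<delta> (hom_ext \<alpha> u) (ore_mult mul \<sigma> \<delta> v w) K
      = ore_mult mul \<sigma> \<delta> (ore_mult mul \<sigma> \<delta> u v) (hom_ext \<alpha> w) K"
    using main by blast
qed

end
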